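(* Let $n\ge 1$, let $a_1,\dots,a_n$ be positive integers, let $b\ge 0$ be an integer, and let $M$ be the least common multiple of $a_1,\dots,a_n$. Put $d_i=M/a_i$ for $i=1,\dots,n$, and $$f(t_1,\dots,t_n,t_{n+1})=\frac{1}{M}\Bigl(b-\sum_{i=1}^n a_it_i-t_{n+1}\Bigr).$$ Let $Q(b)$ be the number of $n$-tuples $(x_1,\dots,x_n)$ of non-negative integers with $\sum_{i=1}^n a_ix_i\le b$. Then $$Q(b)=\sum_{t_1=0}^{d_1-1}\cdots\sum_{t_n=0}^{d_n-1}\sum_{t_{n+1}=0}^{M-1} C\bigl(f(t_1,\dots,t_n,t_{n+1})+1;\,n\bigr).$$
   Context: For a real number $k$ and a non-negative integer $l$, define $C(k;l)=\frac{1}{l!}\,k(k+1)\cdots(k+l-1)$ if $k$ is a positive integer (natural number), and $C(k;l)=0$ otherwise (in particular $C(k;l)=0$ whenever $k$ is not an integer or $k\le 0$). *)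

theory Defs
  imports Main "HOL-Computational_Algebra.Computational_Algebra"
begin

definition Cnum :: "real \<Rightarrow> nat \<Rightarrow> real" where
  "Cnum k l = (if k \<in> \<int> \<and> k > 0 then pochhammer k l / fact l else 0)"

end

theory Submission
  imports Defs
begin


definition Sset :: "nat \<Rightarrow> nat \<Rightarrow> (nat \<Rightarrow> nat) set" where
 "Sset n K = {q. (\<forall>i. i \<notin> {1..n} \<longrightarrow> q i = 0) \<and> (\<Sum>i=1..n. q i) \<le> K}"

lemma count_le: "card (Sset n K) = (K+n) choose n"
proof (induction n arbitrary: K)
  case 0
  have "Sset 0 K = {\<lambda>_. 0}" unfolding Sset_def by (auto simp: fun_eq_iff)
  then show ?case by simp
next
  case (Suc n)
  have fin: "finite (Sset n j)" for j
  proof (rule ccontr)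
    assume "infinite (Sset n j)"
    then have "card (Sset n j) = 0" by simp
    moreover have "0 < (j + n) choose n" by (simp add: zero_less_binomial)
    ultimately show False using Suc.IH[of j] by simp
  qed
  have eq: "Sset (Suc n) K = (\<Union>j\<in>{..K}. (\<lambda>q. q(Suc n := j)) ` Sset n (K - j))"
  proof (rule set_eqI, rule iffI)
    fix x assume x: "x \<in> Sset (Suc n) K"
    let ?y = "x(Suc n := 0)"
    have s1: "(\<Sum>i=1..n. ?y i) = (\<Sum>i=1..n. x i)" by (rule sum.cong) auto
    have s2: "(\<Sum>i=1..Suc n. x i) = (\<Sum>i=1..n. x i) + x (Suc n)" by simp
    have "?y \<in> Sset n (K - x (Suc n))" unfolding Sset_def
    proof (intro CollectI conjI allI impI)
      fix i assume "i \<notin> {1..n}"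
      then show "?y i = 0" using x unfolding Sset_def by (cases "i = Suc n") auto
    next
      show "(\<Sum>i=1..n. ?y i) \<le> K - x (Suc n)" using x s1 s2 unfolding Sset_def by (simp add: le_diff_conv2 del: sum.atLeast_Suc_atMost_Suc_shift)
    qed
    moreover have "x = ?y(Suc n := x (Suc n))" by simp
    moreover have "x (Suc n) \<in> {..K}" using x s2 unfolding Sset_def by auto
    ultimately show "x \<in> (\<Union>j\<in>{..K}. (\<lambda>q. q(Suc n := j)) ` Sset n (K - j))" by blast
  next
    fix x assume "x \<in> (\<Union>j\<in>{..K}. (\<lambda>q. q(Suc n := j)) ` Sset n (K - j))"
    then obtain j q where j: "j \<le> K" and q: "q \<in> Sset n (K - j)" and xq: "x = q(Suc n := j)" by auto
    have s1: "(\<Sum>i=1..n. x i) = (\<Sum>i=1..n. q i)" unfolding xq by (rule sum.cong) auto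
    have s2: "(\<Sum>i=1..Suc n. x i) = (\<Sum>i=1..n. x i) + x (Suc n)" by simp
    show "x \<in> Sset (Suc n) K" using q j s1 s2 unfolding Sset_def xq by auto
  qed
  have inj: "inj_on (\<lambda>q. q(Suc n := j)) (Sset n m)" for j m
  proof (rule inj_onI)
    fix q q' assume "q \<in> Sset n m" "q' \<in> Sset n m" "q(Suc n := j) = q'(Suc n := j)"
    then show "q = q'" unfolding Sset_def
    proof (intro ext)
      fix i assume h: "q(Suc n := j) = q'(Suc n := j)" and A: "q \<in> {q. (\<forall>i. i \<notin> {1..n} \<longrightarrow> q i = 0) \<and> (\<Sum>i=1..n. q i) \<le> m}"
        and B: "q' \<in> {q. (\<forall>i. i \<notin> {1..n} \<longrightarrow> q i = 0) \<and> (\<Sum>i=1..n. q i) \<le> m}"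
      show "q i = q' i"
      proof (cases "i = Suc n")
        case True then show ?thesis using A B by auto
      next
        case False then show ?thesis using fun_cong[OF h, of i] by simp
      qed
    qed
  qed
  have "card (Sset (Suc n) K) = (\<Sum>j\<le>K. card ((\<lambda>q. q(Suc n := j)) ` Sset n (K - j)))"
    unfolding eq
  proof (rule card_UN_disjoint)
    show "finite {..K}" by simp
    show "\<forall>j\<in>{..K}. finite ((\<lambda>q. q(Suc n := j)) ` Sset n (K - j))" using fin by blast
    show "\<forall>j\<in>{..K}. \<forall>j'\<in>{..K}. j \<noteq> j' \<longrightarrow>
      (\<lambda>q. q(Suc n := j)) ` Sset n (K - j) \<inter> (\<lambda>q. q(Suc n := j')) ` Sset n (K - j') = {}"
    proof (intro ballI impI)
      fix j j' :: nat assume "j \<noteq> j'"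
      then show "(\<lambda>q. q(Suc n := j)) ` Sset n (K - j) \<inter> (\<lambda>q. q(Suc n := j')) ` Sset n (K - j') = {}"
        by (auto dest!: fun_cong[where x="Suc n"])
    qed
  qed
  also have "\<dots> = (\<Sum>j\<le>K. (K - j + n) choose n)"
    using inj by (simp add: card_image Suc.IH)
  also have "\<dots> = (\<Sum>j\<le>K. (n + j) choose n)"
    by (rule sum.reindex_bij_witness[where i="\<lambda>j. K - j" and j="\<lambda>j. K - j"]) (auto simp: add.commute)
  also have "\<dots> = (n + K + 1) choose (n + 1)" by (rule choose_rising_sum(1))
  also have "\<dots> = (K + Suc n) choose Suc n" by (simp add: add.commute)
  finally show ?case .
qed




lemma Cnum_nat: "Cnum (real k + 1) n = real ((k + n) choose n)"
proof -
  have "real ((k + n) choose n) = (real (k + n)) gchoose n" by (rule binomial_gbinomial)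
  also have "\<dots> = pochhammer (real k + 1) n / fact n" by (simp add: gbinomial_pochhammer')
  finally have "real ((k + n) choose n) = pochhammer (real k + 1) n / fact n" .
  moreover have "real k + 1 \<in> \<int>" by simp
  moreover have "real k + 1 > 0" by simp
  ultimately show ?thesis unfolding Cnum_def by simp
qed

lemma inner_sum:
  fixes M n :: nat and D :: int
  assumes M: "M > 0"
  shows "(\<Sum>s<M. Cnum ((real_of_int D - real s) / real M + 1) n)
       = (if D \<ge> 0 then real ((nat (D div int M) + n) choose n) else 0)"
proof -
  define s0 where "s0 = nat (D mod int M)"
  have s0M: "s0 \<in> {..<M}" using M unfolding s0_def by (simp add: nat_less_iff)
  have s0eq: "int s0 = D mod int M" using M unfolding s0_def by simp
  have zero: "Cnum ((real_of_int D - real s) / real M + 1) n = 0" if s: "s \<in> {..<M} - {s0}" for s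
  proof -
    have "(real_of_int D - real s) / real M + 1 \<notin> \<int>"
    proof
      assume "(real_of_int D - real s) / real M + 1 \<in> \<int>"
      then obtain k where k: "(real_of_int D - real s) / real M + 1 = real_of_int k" by (metis Ints_cases)
      then have "real_of_int D - real s = real M * real_of_int (k - 1)" using M by (simp add: field_simps)
      then have "D - int s = int M * (k - 1)"
        by (metis of_int_eq_iff of_int_diff of_int_mult of_int_of_nat_eq)
      then have "D mod int M = int s mod int M" by (metis mod_mult_self4 mult.commute add.commute diff_add_cancel)
      also have "\<dots> = int s" using s by simp
      finally show False using s s0eq by auto
    qed
    then show ?thesis unfolding Cnum_def by simp
  qed
  have "(\<Sum>s<M. Cnum ((real_of_int D - real s) / real M + 1) n)
      = Cnum ((real_of_int D - real s0) / real M + 1) n"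
    using sum.remove[OF _ s0M, of "\<lambda>s. Cnum ((real_of_int D - real s) / real M + 1) n"] zero by simp
  also have "(real_of_int D - real s0) / real M = real_of_int (D div int M)"
  proof -
    have "D = int M * (D div int M) + int s0" using s0eq by simp
    then have "real_of_int D = real M * real_of_int (D div int M) + real s0"
      by (metis of_int_add of_int_mult of_int_of_nat_eq)
    then show ?thesis using M by (simp add: field_simps)
  qed
  finally have eq: "(\<Sum>s<M. Cnum ((real_of_int D - real s) / real M + 1) n)
      = Cnum (real_of_int (D div int M) + 1) n" .
  show ?thesis
  proof (cases "D \<ge> 0")
    case True
    then have "D div int M \<ge> 0" using M by (simp add: pos_imp_zdiv_nonneg_iff)
    then show ?thesis using eq True Cnum_nat[of "nat (D div int M)" n] by simp
  next
    case False
    then have "D div int M < 0" using M by (simp add: div_neg_pos_less0)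
    then have "real_of_int (D div int M) + 1 \<le> 0" by linarith
    then show ?thesis using eq False unfolding Cnum_def by simp
  qed
qed


lemma finite_supp_bounded:
  "finite {x::nat\<Rightarrow>nat. (\<forall>i. i \<notin> {1..n} \<longrightarrow> x i = 0) \<and> (\<forall>i\<in>{1..n}. x i \<le> B)}"
proof -
  let ?g = "\<lambda>f i. if i \<in> {1..n} then f i else (0::nat)"
  have "{x::nat\<Rightarrow>nat. (\<forall>i. i \<notin> {1..n} \<longrightarrow> x i = 0) \<and> (\<forall>i\<in>{1..n}. x i \<le> B)}
        \<subseteq> ?g ` (PiE {1..n} (\<lambda>_. {..B}))"
  proof
    fix x assume x: "x \<in> {x::nat\<Rightarrow>nat. (\<forall>i. i \<notin> {1..n} \<longrightarrow> x i = 0) \<and> (\<forall>i\<in>{1..n}. x i \<le> B)}"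
    have "x = ?g (restrict x {1..n})" using x by (auto simp: fun_eq_iff)
    moreover have "restrict x {1..n} \<in> PiE {1..n} (\<lambda>_. {..B})" using x by auto
    ultimately show "x \<in> ?g ` (PiE {1..n} (\<lambda>_. {..B}))" by blast
  qed
  moreover have "finite (?g ` (PiE {1..n} (\<lambda>_. {..B})))" by (intro finite_imageI finite_PiE) auto
  ultimately show ?thesis by (rule finite_subset)
qed

lemma sum_split_mod:
  fixes a d t q :: "nat \<Rightarrow> nat" and M :: nat
  assumes "\<forall>i\<in>{1..n}. a i * d i = M"
  shows "(\<Sum>i=1..n. a i * (d i * q i + t i)) = M * (\<Sum>i=1..n. q i) + (\<Sum>i=1..n. a i * t i)"
proof -
  have "(\<Sum>i=1..n. a i * (d i * q i + t i)) = (\<Sum>i=1..n. M * q i + a i * t i)"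
    by (rule sum.cong) (use assms in \<open>auto simp: algebra_simps\<close>)
  also have "\<dots> = M * (\<Sum>i=1..n. q i) + (\<Sum>i=1..n. a i * t i)"
    by (simp add: sum.distrib sum_distrib_left)
  finally show ?thesis .
qed


lemma fiber_card:
  fixes a d t :: "nat \<Rightarrow> nat" and M b n :: nat
  assumes M: "M > 0" and ad: "\<forall>i\<in>{1..n}. a i * d i = M" and td: "\<forall>i\<in>{1..n}. t i < d i"
  shows "card {x. (\<forall>i. i \<notin> {1..n} \<longrightarrow> x i = 0) \<and> (\<Sum>i=1..n. a i * x i) \<le> b
                 \<and> (\<forall>i\<in>{1..n}. x i mod d i = t i)}
       = (if (\<Sum>i=1..n. a i * t i) \<le> b
          then ((b - (\<Sum>i=1..n. a i * t i)) div M + n) choose n else 0)"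
proof -
  define A where "A = (\<Sum>i=1..n. a i * t i)"
  define g where "g = (\<lambda>q i. if i \<in> {1..n} then d i * q i + t i else (0::nat))"
  define Q where "Q = {q. (\<forall>i. i \<notin> {1..n} \<longrightarrow> q i = 0) \<and> M * (\<Sum>i=1..n. q i) + A \<le> b}"
  let ?X = "{x. (\<forall>i. i \<notin> {1..n} \<longrightarrow> x i = 0) \<and> (\<Sum>i=1..n. a i * x i) \<le> b
                 \<and> (\<forall>i\<in>{1..n}. x i mod d i = t i)}"
  have gsum: "(\<Sum>i=1..n. a i * g q i) = M * (\<Sum>i=1..n. q i) + A" for q
  proof -
    have "(\<Sum>i=1..n. a i * g q i) = (\<Sum>i=1..n. a i * (d i * q i + t i))"
      by (rule sum.cong) (auto simp: g_def)
    then show ?thesis using sum_split_mod[OF ad] unfolding A_def by simp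
  qed
  have "?X = g ` Q"
  proof (rule set_eqI, rule iffI)
    fix x assume x: "x \<in> ?X"
    define q where "q = (\<lambda>i. if i \<in> {1..n} then x i div d i else 0)"
    have "g q = x"
    proof
      fix i show "g q i = x i"
      proof (cases "i \<in> {1..n}")
        case True
        then have "x i mod d i = t i" using x by auto
        then have "d i * (x i div d i) + t i = x i" by (metis div_mult_mod_eq mult.commute)
        then show ?thesis using True unfolding g_def q_def by simp
      next
        case False then show ?thesis using x unfolding g_def by auto
      qed
    qed
    moreover have "q \<in> Q" unfolding Q_def
    proof (intro CollectI conjI allI impI)
      fix i assume "i \<notin> {1..n}" then show "q i = 0" unfolding q_def by auto
    next
      show "M * (\<Sum>i=1..n. q i) + A \<le> b" using gsum[of q] x \<open>g q = x\<close> by simp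
    qed
    ultimately show "x \<in> g ` Q" by blast
  next
    fix x assume "x \<in> g ` Q"
    then obtain q where q: "q \<in> Q" and xq: "x = g q" by auto
    have "\<forall>i\<in>{1..n}. x i mod d i = t i"
      using td unfolding xq g_def by simp
    moreover have "\<forall>i. i \<notin> {1..n} \<longrightarrow> x i = 0" unfolding xq g_def by simp
    moreover have "(\<Sum>i=1..n. a i * x i) \<le> b" using gsum[of q] q unfolding xq Q_def by simp
    ultimately show "x \<in> ?X" by blast
  qed
  moreover have "inj_on g Q"
  proof (rule inj_onI)
    fix q q' assume q: "q \<in> Q" and q': "q' \<in> Q" and e: "g q = g q'"
    show "q = q'"
    proof
      fix i show "q i = q' i"
      proof (cases "i \<in> {1..n}")
        case True
        then have "d i * q i + t i = d i * q' i + t i" using fun_cong[OF e, of i] unfolding g_def by simp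
        moreover have "d i > 0" using td True by fastforce
        ultimately show ?thesis by simp
      next
        case False then show ?thesis using q q' unfolding Q_def by auto
      qed
    qed
  qed
  moreover have "Q = (if A \<le> b then Sset n ((b - A) div M) else {})"
  proof (cases "A \<le> b")
    case True
    have "M * s + A \<le> b \<longleftrightarrow> s \<le> (b - A) div M" for s
      using True M by (simp add: less_eq_div_iff_mult_less_eq mult.commute le_diff_conv2[symmetric])
    then show ?thesis using True unfolding Q_def Sset_def by auto
  next
    case False then show ?thesis unfolding Q_def by auto
  qed
  ultimately have "card ?X = (if A \<le> b then card (Sset n ((b - A) div M)) else 0)"
    by (simp add: card_image)
  then show ?thesis unfolding A_def by (simp add: count_le add.commute)
qed

theorem mainTheorem2:
  fixes n :: nat and a :: "nat \<Rightarrow> nat" and b :: nat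
  assumes "n \<ge> 1"
    and "\<forall>i\<in>{1..n}. a i > 0"
  shows "real (card {x :: nat \<Rightarrow> nat. (\<forall>i. i \<notin> {1..n} \<longrightarrow> x i = 0)
                      \<and> (\<Sum>i=1..n. a i * x i) \<le> b})
       = (\<Sum>t\<in>{t :: nat \<Rightarrow> nat. (\<forall>i\<in>{1..n}. t i < Lcm (a ` {1..n}) div a i)
                                 \<and> (\<forall>i. i \<notin> {1..n} \<longrightarrow> t i = 0)}.
            \<Sum>s<Lcm (a ` {1..n}).
              Cnum ((real b - (\<Sum>i=1..n. real (a i) * real (t i)) - real s)
                      / real (Lcm (a ` {1..n})) + 1) n)"
proof -
  define M where "M = Lcm (a ` {1..n})"
  define d where "d = (\<lambda>i. M div a i)"
  define X where "X = {x :: nat \<Rightarrow> nat. (\<forall>i. i \<notin> {1..n} \<longrightarrow> x i = 0) \<and> (\<Sum>i=1..n. a i * x i) \<le> b}"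
  define T where "T = {t :: nat \<Rightarrow> nat. (\<forall>i\<in>{1..n}. t i < M div a i) \<and> (\<forall>i. i \<notin> {1..n} \<longrightarrow> t i = 0)}"
  define Xt where "Xt = (\<lambda>t. {x. (\<forall>i. i \<notin> {1..n} \<longrightarrow> x i = 0) \<and> (\<Sum>i=1..n. a i * x i) \<le> b
                 \<and> (\<forall>i\<in>{1..n}. x i mod d i = t i)})"
  have Mpos: "M > 0"
  proof -
    have z: "0 \<notin> a ` {1..n}" using assms(2) by fastforce
    have "Lcm (a ` {1..n}) \<noteq> 0" using z Lcm_0_iff[of "a ` {1..n}"] by simp
    then show ?thesis unfolding M_def by (simp only: neq0_conv)
  qed
  have ad: "\<forall>i\<in>{1..n}. a i * d i = M"
  proof
    fix i assume i: "i \<in> {1..n}"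
    then have "a i dvd M" unfolding M_def by (simp add: dvd_Lcm)
    then show "a i * d i = M" unfolding d_def by simp
  qed
  have dpos: "d i > 0" if "i \<in> {1..n}" for i
  proof -
    have "a i * d i = M" using ad that by blast
    then show ?thesis using Mpos by (cases "d i = 0") auto
  qed
  have finX: "finite X"
  proof (rule finite_subset[OF _ finite_supp_bounded[of n b]])
    show "X \<subseteq> {x. (\<forall>i. i \<notin> {1..n} \<longrightarrow> x i = 0) \<and> (\<forall>i\<in>{1..n}. x i \<le> b)}"
    proof (intro subsetI CollectI conjI ballI)
      fix x i assume x: "x \<in> X" and i: "i \<in> {1..n}"
      have "x i \<le> a i * x i" using assms(2) i by (simp add: Suc_le_eq)
      also have "\<dots> \<le> (\<Sum>i=1..n. a i * x i)" using i by (intro member_le_sum) auto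
      also have "\<dots> \<le> b" using x unfolding X_def by simp
      finally show "x i \<le> b" .
    qed (use X_def in auto)
  qed
  have finT: "finite T"
  proof (rule finite_subset[OF _ finite_supp_bounded[of n M]])
    show "T \<subseteq> {x. (\<forall>i. i \<notin> {1..n} \<longrightarrow> x i = 0) \<and> (\<forall>i\<in>{1..n}. x i \<le> M)}"
    proof (intro subsetI CollectI conjI ballI)
      fix t i assume t: "t \<in> T" and i: "i \<in> {1..n}"
      have "t i < M div a i" using t i unfolding T_def by auto
      also have "\<dots> \<le> M" by simp
      finally show "t i \<le> M" by simp
    qed (use T_def in auto)
  qed
  have XU: "X = (\<Union>t\<in>T. Xt t)"
  proof (rule set_eqI, rule iffI)
    fix x assume x: "x \<in> X"
    define t where "t = (\<lambda>i. if i \<in> {1..n} then x i mod d i else 0)"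
    have "t \<in> T" unfolding T_def
    proof (intro CollectI conjI ballI allI impI)
      fix i assume i: "i \<in> {1..n}"
      then have "t i = x i mod d i" unfolding t_def by simp
      also have "\<dots> < d i" using dpos[OF i] by (rule mod_less_divisor)
      finally show "t i < M div a i" unfolding d_def .
    next
      fix i assume "i \<notin> {1..n}" then show "t i = 0" unfolding t_def by (simp only: if_False)
    qed
    moreover have "x \<in> Xt t" using x unfolding Xt_def X_def t_def by auto
    ultimately show "x \<in> (\<Union>t\<in>T. Xt t)" by blast
  next
    fix x assume "x \<in> (\<Union>t\<in>T. Xt t)"
    then show "x \<in> X" unfolding Xt_def X_def by auto
  qed
  have "card X = (\<Sum>t\<in>T. card (Xt t))"
    unfolding XU
  proof (rule card_UN_disjoint[OF finT])
    show "\<forall>t\<in>T. finite (Xt t)"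
    proof
      fix t assume "t \<in> T"
      have "Xt t \<subseteq> X" unfolding X_def Xt_def by blast
      then show "finite (Xt t)" using finX by (rule finite_subset)
    qed
    show "\<forall>t\<in>T. \<forall>t'\<in>T. t \<noteq> t' \<longrightarrow> Xt t \<inter> Xt t' = {}"
    proof (intro ballI impI)
      fix t t' assume t: "t \<in> T" and t': "t' \<in> T" and ne: "t \<noteq> t'"
      show "Xt t \<inter> Xt t' = {}"
      proof (rule ccontr)
        assume "Xt t \<inter> Xt t' \<noteq> {}"
        then obtain x where "x \<in> Xt t" "x \<in> Xt t'" by blast
        then have A1: "\<forall>i\<in>{1..n}. t i = t' i" unfolding Xt_def by auto
        have A2: "\<forall>i. i \<notin> {1..n} \<longrightarrow> t i = t' i" using t t' unfolding T_def by auto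
        have "t = t'"
        proof (rule ext)
          fix i show "t i = t' i" 
          proof (cases "i \<in> {1..n}")
            case True then show ?thesis using A1 by simp
          next
            case False then show ?thesis using A2 by simp
          qed
        qed
        then show False using ne by simp
      qed
    qed
  qed
  then have "real (card X) = (\<Sum>t\<in>T. real (card (Xt t)))" by simp
  also have "\<dots> = (\<Sum>t\<in>T. \<Sum>s<M. Cnum ((real b - (\<Sum>i=1..n. real (a i) * real (t i)) - real s) / real M + 1) n)"
  proof (rule sum.cong[OF refl])
    fix t assume t: "t \<in> T"
    define A where "A = (\<Sum>i=1..n. a i * t i)"
    have td: "\<forall>i\<in>{1..n}. t i < d i" using t unfolding T_def d_def by auto
    have c: "card (Xt t) = (if A \<le> b then ((b - A) div M + n) choose n else 0)"
      unfolding Xt_def A_def by (rule fiber_card[OF Mpos ad td])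
    have rA: "real b - (\<Sum>i=1..n. real (a i) * real (t i)) = real_of_int (int b - int A)"
      unfolding A_def by simp
    have "(\<Sum>s<M. Cnum ((real b - (\<Sum>i=1..n. real (a i) * real (t i)) - real s) / real M + 1) n)
        = (if int b - int A \<ge> 0 then real ((nat ((int b - int A) div int M) + n) choose n) else 0)"
      unfolding rA by (rule inner_sum[OF Mpos])
    also have "\<dots> = real (card (Xt t))"
    proof (cases "A \<le> b")
      case True
      have e1: "(int b - int A) div int M = int ((b - A) div M)" using True by (simp add: zdiv_int of_nat_diff)
      have e2: "int b - int A \<ge> 0" using True by simp
      show ?thesis unfolding c using True e1 e2 by simp
    next
      case False then show ?thesis using c by simp
    qed
    finally show "real (card (Xt t)) = (\<Sum>s<M. Cnum ((real b - (\<Sum>i=1..n. real (a i) * real (t i)) - real s) / real M + 1) n)" by simp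
  qed
  finally show ?thesis unfolding X_def T_def M_def .
qed

end
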